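(* Let $q>0$, $q\neq1$, and let $f(x)=\sum_{N=0}^\infty a_Nx^N$ be a formal power series. Then $$e^{-\frac{1}{[2]_q^2}D_x^2}f(x)=\sum_{N=0}^\infty a_N\frac{H_N(x;q)}{[2]_q^N},$$ where the left-hand side is understood termwise, i.e. as $\sum_N a_N\,e^{-\frac{1}{[2]_q^2}D_x^2}x^N$.
   Context: For $n\ge 0$ let $[n]_q=\frac{q^n-1}{q-1}$, $[0]_q!=1$, $[n]_q!=[1]_q\cdots[n]_q$, and $e_q(z)=\sum_{n\ge0}z^n/[n]_q!$. The $q$-derivative acts by $D_x x^n=[n]_qx^{n-1}$, and $e^{aD_x^2}:=\sum_{n\ge0}\frac{a^n}{n!}D_x^{2n}$. The $q$-Hermite polynomials $H_N(x;q)$ are defined by the identity of formal power series in $t$: $e^{-t^2}e_q([2]_q t x)=\sum_{N\ge0}H_N(x;q)\,t^N/[N]_q!$. *)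

theory Defs
  imports "HOL-Computational_Algebra.Computational_Algebra"
begin

definition qint :: "real \<Rightarrow> nat \<Rightarrow> real" where
  "qint q n = (q ^ n - 1) / (q - 1)"

definition qfact :: "real \<Rightarrow> nat \<Rightarrow> real" where
  "qfact q n = (\<Prod>i=1..n. qint q i)"

text \<open>The q-derivative on polynomials in x: D_x x^n = [n]_q x^(n-1).\<close>
definition qderiv :: "real \<Rightarrow> real poly \<Rightarrow> real poly" where
  "qderiv q p = Poly (map (\<lambda>i. qint q (Suc i) * coeff p (Suc i)) [0..<degree p])"

text \<open>The series is finite on polynomials: D_x^(2n) p = 0 once 2n > degree p,
  so summing over n \<le> degree p captures all terms.\<close>
definition qexpD2 :: "real \<Rightarrow> real \<Rightarrow> real poly \<Rightarrow> real poly" where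
  "qexpD2 q c p = (\<Sum>n\<le>degree p. smult (c ^ n / fact n) ((qderiv q ^^ (2 * n)) p))"

text \<open>Generating function, as a formal power series in t with polynomial (in x)
  coefficients: e^(-t^2) and e_q([2]_q t x).\<close>
definition exp_neg_t2 :: "real poly fps" where
  "exp_neg_t2 = Abs_fps (\<lambda>n. if even n then [: (-1) ^ (n div 2) / fact (n div 2) :] else 0)"

definition eq_gen :: "real \<Rightarrow> real poly fps" where
  "eq_gen q = Abs_fps (\<lambda>n. monom (qint q 2 ^ n / qfact q n) n)"

text \<open>q-Hermite polynomials: e^(-t^2) e_q([2]_q t x) = sum_N H_N(x;q) t^N/[N]_q!.\<close>
definition qhermite :: "real \<Rightarrow> nat \<Rightarrow> real poly" where
  "qhermite q N = smult (qfact q N) (fps_nth (exp_neg_t2 * eq_gen q) N)"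

end

theory Submission
  imports Defs
begin

lemma coeff_qderiv: "coeff (qderiv q p) i = qint q (Suc i) * coeff p (Suc i)"
  unfolding qderiv_def
  by (auto simp: nth_default_def coeff_eq_0 not_less)

lemma qint0[simp]: "qint q 0 = 0" by (simp add: qint_def)

lemma qderiv_monom: "qderiv q (monom a n) = monom (qint q n * a) (n - 1)"
  by (cases n) (auto intro!: poly_eqI simp: coeff_qderiv coeff_monom)

lemma qderiv_iter: "(qderiv q ^^ k) (monom a n) = monom (a * (\<Prod>i<k. qint q (n - i))) (n - k)"
proof (induction k)
  case 0 then show ?case by simp
next
  case (Suc k) then show ?case
    by (simp add: qderiv_monom prod.lessThan_Suc mult_ac diff_diff_add)
qed

lemma qfact_split: "qfact q (m + k) = qfact q m * (\<Prod>i<k. qint q (m + k - i))"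
proof (induction k)
  case 0 then show ?case by simp
next
  case (Suc k)
  have a: "qfact q (m + Suc k) = qfact q (m + k) * qint q (m + Suc k)"
    unfolding qfact_def by (simp add: prod.atLeast1_atMost_eq prod.lessThan_Suc)
  have b: "(\<Prod>i<Suc k. qint q (m + Suc k - i)) = qint q (m + Suc k) * (\<Prod>i<k. qint q (m + k - i))"
    by (subst prod.lessThan_Suc_shift) simp
  show ?case using Suc a b by simp
qed

lemma qint_nz: assumes "q > 0" "q \<noteq> 1" "i > 0" shows "qint q i \<noteq> 0"
proof -
  have "q ^ i \<noteq> 1"
  proof (cases "q < 1")
    case True then have "q ^ i < 1" using assms by (simp add: power_less_one_iff)
    then show ?thesis by simp
  next
    case False then have "q > 1" using assms by simp
    then have "q ^ i > 1" using assms by simp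
    then show ?thesis by simp
  qed
  then show ?thesis using assms unfolding qint_def by simp
qed

lemma qfact_nz: assumes "q > 0" "q \<noteq> 1" shows "qfact q n \<noteq> 0"
  unfolding qfact_def using qint_nz[OF assms] by (simp add: prod_zero_iff)

lemma prod_qint_le: assumes "q > 0" "q \<noteq> 1" "k \<le> n"
  shows "(\<Prod>i<k. qint q (n - i)) = qfact q n / qfact q (n - k)"
  using qfact_split[of q "n - k" k] assms qfact_nz[OF assms(1,2)] by (simp add: field_simps)

lemma prod_qint_gt: assumes "n < k" shows "(\<Prod>i<k. qint q (n - i)) = 0"
  using assms by (auto intro!: bexI[of _ n])

lemma sum_even_odd: fixes m :: nat shows "(\<Sum>i<2*m. f i) = (\<Sum>j<m. f (2*j) + f (2*j+1))"
  by (induction m) (simp_all add: algebra_simps)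

lemma smult_sum2: "smult c (\<Sum>i\<in>S. f i) = (\<Sum>i\<in>S. smult c (f i))"
  by (induction S rule: infinite_finite_induct) (simp_all add: smult_add_right)

lemma main_N:
  assumes q: "q > 0" "q \<noteq> 1"
  shows "qexpD2 q (- 1 / (qint q 2) ^ 2) (monom 1 N) = smult (1 / (qint q 2) ^ N) (qhermite q N)"
proof -
  define w where "w = qint q 2"
  have w0: "w \<noteq> 0" unfolding w_def using qint_nz[OF q] by simp
  define c where "c = - 1 / w ^ 2"
  define T where "T n = (if 2*n \<le> N then monom (c^n / fact n * (qfact q N / qfact q (N - 2*n))) (N - 2*n) else 0)" for n
  have L: "qexpD2 q c (monom 1 N) = (\<Sum>n\<le>N. T n)"
    unfolding qexpD2_def degree_monom_eq[OF one_neq_zero]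
  proof (rule sum.cong[OF refl])
    fix n assume "n \<in> {..N}"
    show "smult (c ^ n / fact n) ((qderiv q ^^ (2 * n)) (monom 1 N)) = T n"
      unfolding qderiv_iter T_def
      by (cases "2*n \<le> N") (simp_all add: prod_qint_le[OF q] prod_qint_gt smult_monom)
  qed
  define g where "g i = (if i \<le> N then fps_nth exp_neg_t2 i * fps_nth (eq_gen q) (N - i) else 0)" for i
  have "fps_nth (exp_neg_t2 * eq_gen q) N = (\<Sum>i<2*(N+1). g i)"
  proof -
    have "fps_nth (exp_neg_t2 * eq_gen q) N = (\<Sum>i\<in>{0..N}. g i)"
      unfolding fps_mult_nth g_def by simp
    also have "\<dots> = (\<Sum>i<2*(N+1). g i)"
      by (rule sum.mono_neutral_left) (auto simp: g_def)
    finally show ?thesis .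
  qed
  also have "\<dots> = (\<Sum>j<N+1. g (2*j) + g (2*j+1))" by (rule sum_even_odd)
  also have "\<dots> = (\<Sum>j\<le>N. g (2*j))"
  proof -
    have "g (2*j+1) = 0" for j by (simp add: g_def exp_neg_t2_def)
    then show ?thesis by (simp add: lessThan_Suc_atMost)
  qed
  finally have H: "fps_nth (exp_neg_t2 * eq_gen q) N = (\<Sum>j\<le>N. g (2*j))" .
  have R: "smult (1 / w ^ N) (qhermite q N) = (\<Sum>n\<le>N. T n)"
    unfolding qhermite_def H smult_sum2 smult_smult
  proof (rule sum.cong[OF refl])
    fix n assume "n \<in> {..N}"
    show "smult (1 / w ^ N * qfact q N) (g (2 * n)) = T n"
    proof (cases "2*n \<le> N")
      case True
      have wp: "w ^ N = w^(2*n) * w^(N-2*n)" using True by (simp add: power_add[symmetric])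
      have cn: "c^n = (-1)^n / w^(2*n)" unfolding c_def by (simp add: power_divide power_mult power_minus[of "1 / w^2"])
      show ?thesis using True w0 qfact_nz[OF q] unfolding g_def T_def cn
        by (simp add: exp_neg_t2_def eq_gen_def w_def[symmetric] smult_monom
             monom_altdef wp field_simps)
    qed (simp add: g_def T_def)
  qed
  show ?thesis using L R unfolding c_def w_def by simp
qed

theorem mainTheorem10:
  fixes q :: real and f :: "real fps"
  assumes "q > 0" and "q \<noteq> 1"
  shows "(\<lambda>N. smult (fps_nth f N) (qexpD2 q (- 1 / (qint q 2) ^ 2) (monom 1 N)))
       = (\<lambda>N. smult (fps_nth f N / (qint q 2) ^ N) (qhermite q N))"
proof
  fix N
  show "smult (fps_nth f N) (qexpD2 q (- 1 / (qint q 2) ^ 2) (monom 1 N))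
       = smult (fps_nth f N / (qint q 2) ^ N) (qhermite q N)"
    unfolding main_N[OF assms] smult_smult by simp
qed

end
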